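(* Let $q$ be a prime power, let $r,m>1$ be integers, $n=rm$, and let $k$ be an integer with $1<k\le m$. Let $s_1,s_2\ge1$, let $V_{1,1},\dots,V_{1,s_1}\in\mathcal{G}_q(m,k)$ and $\mathcal{C}_1=\bigcup_{h_1=1}^{s_1}\mathrm{Orb}_{\mathbb{F}_{q^m}^*}(V_{1,h_1})$. For $h_2=1,\dots,s_2$ let $\Phi_{2,h_2}:\mathbb{F}_{q^m}\to\mathbb{F}_{q^n}$ be an injective $\mathbb{F}_q$-linear map, $V_{2,h_2}=\Phi_{2,h_2}(\mathbb{F}_{q^m})$, and $\mathcal{C}_2=\bigcup_{h_2=1}^{s_2}\mathrm{Orb}_{\mathbb{F}_{q^n}^*}(V_{2,h_2})\subseteq\mathcal{G}_q(n,m)$. Define $$\mathcal{C}_2\odot\mathcal{C}_1=\bigcup_{h_2=1}^{s_2}\bigcup_{h_1=1}^{s_1}\bigcup_{\alpha\in\mathbb{F}_{q^m}^*}\mathrm{Orb}_{\mathbb{F}_{q^n}^*}\big(\Phi_{2,h_2}(\alpha V_{1,h_1})\big)\subseteq\mathcal{G}_q(n,k).$$ If $\mathcal{C}_2$ is full-length and $d(\mathcal{C}_2)>2(m-k)$, then $\mathcal{C}_2\odot\mathcal{C}_1$ is a full-length multi-orbit cyclic subspace code.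
   Context: For positive integers $k\le N$, $\mathcal{G}_q(N,k)$ denotes the set of $k$-dimensional $\mathbb{F}_q$-subspaces of $\mathbb{F}_{q^N}$. The subspace distance is $d(U,V)=\dim_{\mathbb{F}_q}(U+V)-\dim_{\mathbb{F}_q}(U\cap V)$, and $d(\mathcal{C})=\min\{d(U,V):U,V\in\mathcal{C},U\ne V\}$. For $V\in\mathcal{G}_q(N,k)$, $\mathrm{Orb}_{\mathbb{F}_{q^N}^*}(V)=\{\beta V:\beta\in\mathbb{F}_{q^N}^*\}$; a (multi-orbit) cyclic subspace code is a finite union of such orbits. A one-orbit code $\mathrm{Orb}_{\mathbb{F}_{q^N}^*}(V)$ is full-length if $\{\beta\in\mathbb{F}_{q^N}^*:\beta V=V\}=\mathbb{F}_q^*$; a union $\bigcup_i\mathrm{Orb}(V_i)$ is full-length if each $\mathrm{Orb}(V_i)$ is full-length. *)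

theory Defs
  imports "HOL-Computational_Algebra.Primes"
begin

text \<open>All fields live inside one finite field 'a playing the role of F_{q^n};
  K plays F_q and M plays F_{q^m} (unique subfields of those orders).\<close>

definition is_subfield :: "'a::field set \<Rightarrow> bool" where
  "is_subfield K \<longleftrightarrow> 0 \<in> K \<and> 1 \<in> K \<and>
     (\<forall>x\<in>K. \<forall>y\<in>K. x + y \<in> K \<and> x * y \<in> K) \<and>
     (\<forall>x\<in>K. - x \<in> K \<and> inverse x \<in> K)"

definition ksubspace :: "'a::field set \<Rightarrow> 'a set \<Rightarrow> bool" where
  "ksubspace K W \<longleftrightarrow> 0 \<in> W \<and> (\<forall>x\<in>W. \<forall>y\<in>W. x + y \<in> W) \<and>
     (\<forall>c\<in>K. \<forall>x\<in>W. c * x \<in> W)"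

definition kspan :: "'a::field set \<Rightarrow> 'a set \<Rightarrow> 'a set" where
  "kspan K B = {x. \<exists>f. (\<forall>b\<in>B. f b \<in> K) \<and> x = (\<Sum>b\<in>B. f b * b)}"

definition kindep :: "'a::field set \<Rightarrow> 'a set \<Rightarrow> bool" where
  "kindep K B \<longleftrightarrow> finite B \<and> (\<forall>f. (\<forall>b\<in>B. f b \<in> K) \<longrightarrow>
       (\<Sum>b\<in>B. f b * b) = 0 \<longrightarrow> (\<forall>b\<in>B. f b = 0))"

definition kbasis :: "'a::field set \<Rightarrow> 'a set \<Rightarrow> 'a set \<Rightarrow> bool" where
  "kbasis K W B \<longleftrightarrow> B \<subseteq> W \<and> kindep K B \<and> kspan K B = W"

definition kdim :: "'a::field set \<Rightarrow> 'a set \<Rightarrow> nat" where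
  "kdim K W = card (SOME B. kbasis K W B)"

definition grass :: "'a::field set \<Rightarrow> 'a set \<Rightarrow> nat \<Rightarrow> 'a set set" where
  "grass K U k = {W. W \<subseteq> U \<and> ksubspace K W \<and> kdim K W = k}"

definition ssum :: "'a::field set \<Rightarrow> 'a set \<Rightarrow> 'a set" where
  "ssum U V = {u + v | u v. u \<in> U \<and> v \<in> V}"

definition sdist :: "'a::field set \<Rightarrow> 'a set \<Rightarrow> 'a set \<Rightarrow> nat" where
  "sdist K U V = kdim K (ssum U V) - kdim K (U \<inter> V)"

definition min_dist :: "'a::field set \<Rightarrow> 'a set set \<Rightarrow> nat" where
  "min_dist K C = Min {sdist K U V | U V. U \<in> C \<and> V \<in> C \<and> U \<noteq> V}"

definition orb :: "'a::field set \<Rightarrow> 'a set \<Rightarrow> 'a set set" where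
  "orb A V = {(\<lambda>x. b * x) ` V | b. b \<in> A - {0}}"

text \<open>Orb_A(V) is full-length iff its stabilizer in A* is exactly K*.\<close>
definition full_length_orb :: "'a::field set \<Rightarrow> 'a set \<Rightarrow> 'a set \<Rightarrow> bool" where
  "full_length_orb K A V \<longleftrightarrow> {b \<in> A - {0}. (\<lambda>x. b * x) ` V = V} = K - {0}"

end

theory Submission
  imports Defs "HOL-Library.FuncSet"
begin


lemma sf_facts:
  assumes "is_subfield K"
  shows "0 \<in> K" "1 \<in> K" "x \<in> K \<Longrightarrow> y \<in> K \<Longrightarrow> x + y \<in> K"
    "x \<in> K \<Longrightarrow> y \<in> K \<Longrightarrow> x * y \<in> K" "x \<in> K \<Longrightarrow> - x \<in> K"
    "x \<in> K \<Longrightarrow> inverse x \<in> K"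
  using assms unfolding is_subfield_def by auto

lemma sf_diff: assumes "is_subfield K" "x \<in> K" "y \<in> K" shows "x - y \<in> K"
proof -
  have "x + - y \<in> K" using sf_facts(3)[OF assms(1,2) sf_facts(5)[OF assms(1,3)]] .
  then show ?thesis by (simp only: diff_conv_add_uminus)
qed

lemma ks_facts:
  assumes "ksubspace K W"
  shows "0 \<in> W" "x \<in> W \<Longrightarrow> y \<in> W \<Longrightarrow> x + y \<in> W" "c \<in> K \<Longrightarrow> x \<in> W \<Longrightarrow> c * x \<in> W"
  using assms unfolding ksubspace_def by auto

lemma ks_neg: "is_subfield K \<Longrightarrow> ksubspace K W \<Longrightarrow> x \<in> W \<Longrightarrow> - x \<in> W"
  using ks_facts(3)[of K W "-1" x] sf_facts(2)[of K] sf_facts(5)[of K 1] by simp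

lemma ks_diff: assumes "is_subfield K" "ksubspace K W" "x \<in> W" "y \<in> W" shows "x - y \<in> W"
proof -
  have "x + - y \<in> W" using ks_facts(2)[OF assms(2,3) ks_neg[OF assms(1,2,4)]] .
  then show ?thesis by (simp only: diff_conv_add_uminus)
qed

lemma sum_in:
  assumes "ksubspace K W" "finite B"
  shows "B \<subseteq> W \<Longrightarrow> (\<forall>b\<in>B. f b \<in> K) \<Longrightarrow> (\<Sum>b\<in>B. f b * b) \<in> W"
  using assms(2)
proof (induction B rule: finite_induct)
  case empty
  then show ?case using ks_facts[OF assms(1)] by simp
next
  case (insert x F)
  then show ?case using ks_facts[OF assms(1)] by simp
qed

lemma span_sub: "ksubspace K W \<Longrightarrow> finite B \<Longrightarrow> B \<subseteq> W \<Longrightarrow> kspan K B \<subseteq> W"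
  unfolding kspan_def using sum_in by blast

lemma in_span: "is_subfield K \<Longrightarrow> finite B \<Longrightarrow> x \<in> B \<Longrightarrow> x \<in> kspan K B"
  unfolding kspan_def
proof (intro CollectI exI[of _ "\<lambda>b. if b = x then 1 else 0"] conjI)
  assume "is_subfield K" "finite B" "x \<in> B"
  then show "\<forall>b\<in>B. (if b = x then 1 else 0) \<in> K" using sf_facts by auto
  show "x = (\<Sum>b\<in>B. (if b = x then 1 else 0) * b)"
  proof -
    have "(\<Sum>b\<in>B. (if b = x then 1 else 0) * b) = (\<Sum>b\<in>B. if b = x then b else 0)"
      by (rule sum.cong) auto
    also have "\<dots> = x" using \<open>finite B\<close> \<open>x \<in> B\<close> by (simp add: sum.delta)
    finally show ?thesis by simp
  qed
qed

lemma indep_insert: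
  assumes K: "is_subfield K" and I: "kindep K B" and x: "x \<notin> kspan K B"
  shows "kindep K (insert x B)"
proof -
  have fin: "finite B" using I unfolding kindep_def by auto
  have xB: "x \<notin> B" using in_span[OF K fin] x by blast
  show ?thesis unfolding kindep_def
  proof (intro conjI allI impI)
    show "finite (insert x B)" using fin by simp
    fix f assume fK: "\<forall>b\<in>insert x B. f b \<in> K" and s0: "(\<Sum>b\<in>insert x B. f b * b) = 0"
    have s: "f x * x + (\<Sum>b\<in>B. f b * b) = 0" using s0 fin xB by simp
    have fx: "f x = 0"
    proof (rule ccontr)
      assume nz: "f x \<noteq> 0"
      have "x = (\<Sum>b\<in>B. (- f b * inverse (f x)) * b)"
      proof -
        have "(\<Sum>b\<in>B. (- f b * inverse (f x)) * b) = - inverse (f x) * (\<Sum>b\<in>B. f b * b)"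
          by (simp add: sum_distrib_left algebra_simps)
        also have "(\<Sum>b\<in>B. f b * b) = - (f x * x)" using s by (simp add: eq_neg_iff_add_eq_0 add.commute)
        finally show ?thesis using nz by (simp add: field_simps)
      qed
      moreover have "\<forall>b\<in>B. - f b * inverse (f x) \<in> K"
        using fK sf_facts[OF K] by auto
      ultimately have "x \<in> kspan K B" unfolding kspan_def
        by (intro CollectI exI[of _ "\<lambda>b. - f b * inverse (f x)"]) simp
      then show False using x by blast
    qed
    have "(\<Sum>b\<in>B. f b * b) = 0" using s fx by simp
    then have "\<forall>b\<in>B. f b = 0" using I fK unfolding kindep_def by auto
    then show "\<forall>b\<in>insert x B. f b = 0" using fx by auto
  qed
qed

lemma basis_exists:
  fixes W :: "'a::{field,finite} set"
  assumes K: "is_subfield K" and W: "ksubspace K W"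
  shows "\<exists>B. kbasis K W B"
proof -
  define S where "S = {B. B \<subseteq> W \<and> kindep K B}"
  have "{} \<in> S" unfolding S_def kindep_def by auto
  then have ne: "card ` S \<noteq> {}" by auto
  have finS: "finite (card ` S)" by simp
  obtain B where B: "B \<in> S" "card B = Max (card ` S)"
    using Max_in[OF finS ne] by auto
  have span: "kspan K B = W"
  proof
    show "kspan K B \<subseteq> W" using B span_sub[OF W] unfolding S_def by auto
    show "W \<subseteq> kspan K B"
    proof
      fix x assume xW: "x \<in> W"
      show "x \<in> kspan K B"
      proof (rule ccontr)
        assume nx: "x \<notin> kspan K B"
        have "insert x B \<in> S" using indep_insert[OF K _ nx] B xW unfolding S_def by auto
        then have "card (insert x B) \<le> card B" using B Max_ge[OF finS] by auto
        moreover have "x \<notin> B" using nx in_span[OF K] by auto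
        ultimately show False by simp
      qed
    qed
  qed
  show ?thesis using B span unfolding kbasis_def S_def by auto
qed

lemma basis_card:
  fixes W :: "'a::field set"
  assumes K: "is_subfield K" and B: "kbasis K W B"
  shows "card W = card K ^ card B"
proof -
  have fin: "finite B" and I: "kindep K B" and sp: "kspan K B = W"
    using B unfolding kbasis_def kindep_def by auto
  define g where "g f = (\<Sum>b\<in>B. f b * b)" for f
  have "bij_betw g (PiE B (\<lambda>_. K)) W"
  proof (rule bij_betw_imageI)
    show "inj_on g (PiE B (\<lambda>_. K))"
    proof
      fix f1 f2 assume f1: "f1 \<in> PiE B (\<lambda>_. K)" and f2: "f2 \<in> PiE B (\<lambda>_. K)" and e: "g f1 = g f2"
      have "(\<Sum>b\<in>B. (f1 b - f2 b) * b) = 0"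
        using e unfolding g_def by (simp add: algebra_simps sum_subtractf)
      moreover have "\<forall>b\<in>B. f1 b - f2 b \<in> K" using f1 f2 sf_diff[OF K] by auto
      moreover have ir: "\<And>f. (\<forall>b\<in>B. f b \<in> K) \<Longrightarrow> (\<Sum>b\<in>B. f b * b) = 0 \<Longrightarrow> \<forall>b\<in>B. f b = 0"
        using I unfolding kindep_def by blast
      ultimately have "\<forall>b\<in>B. f1 b - f2 b = 0" using ir[of "\<lambda>b. f1 b - f2 b"] by simp
      then show "f1 = f2" using f1 f2 by (intro PiE_ext) auto
    qed
    show "g ` PiE B (\<lambda>_. K) = W"
    proof
      show "g ` PiE B (\<lambda>_. K) \<subseteq> W" unfolding g_def sp[symmetric] kspan_def by auto
      show "W \<subseteq> g ` PiE B (\<lambda>_. K)"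
      proof
        fix x assume "x \<in> W"
        then obtain f where f: "\<forall>b\<in>B. f b \<in> K" "x = (\<Sum>b\<in>B. f b * b)"
          using sp unfolding kspan_def by auto
        have "restrict f B \<in> PiE B (\<lambda>_. K)" using f by auto
        moreover have "g (restrict f B) = x" unfolding g_def f(2) by (intro sum.cong) auto
        ultimately show "x \<in> g ` PiE B (\<lambda>_. K)" by blast
      qed
    qed
  qed
  then have "card W = card (PiE B (\<lambda>_. K))" by (simp add: bij_betw_same_card)
  also have "\<dots> = card K ^ card B" using fin by (simp add: card_PiE)
  finally show ?thesis .
qed

lemma card_kdim:
  fixes W :: "'a::{field,finite} set"
  assumes K: "is_subfield K" and W: "ksubspace K W"
  shows "card W = card K ^ kdim K W"
proof -
  have "kbasis K W (SOME B. kbasis K W B)" using basis_exists[OF K W] by (rule someI_ex)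
  then show ?thesis unfolding kdim_def using basis_card[OF K] by blast
qed

lemma card_K_gt1:
  fixes K :: "'a::{field,finite} set"
  assumes K: "is_subfield K" shows "card K > 1"
proof -
  have "{0,1} \<subseteq> K" using sf_facts[OF K] by auto
  then have "card {0::'a,1} \<le> card K" by (intro card_mono) simp_all
  then show ?thesis by simp
qed

lemma kdim_eq:
  fixes W :: "'a::{field,finite} set"
  assumes K: "is_subfield K" and W: "ksubspace K W" and c: "card W = card K ^ d"
  shows "kdim K W = d"
  using card_kdim[OF K W] c card_K_gt1[OF K] by simp


lemma ks_mul:
  assumes "ksubspace K W" shows "ksubspace K ((\<lambda>x. b * x) ` W)"
  unfolding ksubspace_def
proof (intro conjI ballI)
  show "0 \<in> (\<lambda>x. b * x) ` W" using ks_facts(1)[OF assms] by (intro image_eqI[of _ _ 0]) simp_all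
  fix x y assume "x \<in> (\<lambda>x. b * x) ` W" "y \<in> (\<lambda>x. b * x) ` W"
  then obtain u v where uv: "u \<in> W" "v \<in> W" "x = b * u" "y = b * v" by auto
  have "x + y = b * (u + v)" using uv by (simp add: distrib_left)
  then show "x + y \<in> (\<lambda>x. b * x) ` W" using ks_facts(2)[OF assms uv(1,2)] by blast
next
  fix c x assume c: "c \<in> K" and "x \<in> (\<lambda>x. b * x) ` W"
  then obtain u where u: "u \<in> W" "x = b * u" by auto
  have "c * x = b * (c * u)" using u by (simp add: mult.left_commute)
  then show "c * x \<in> (\<lambda>x. b * x) ` W" using ks_facts(3)[OF assms c u(1)] by blast
qed

lemma ks_img:
  assumes W: "ksubspace K W" and WM: "W \<subseteq> M"
    and add: "\<And>x y. x \<in> M \<Longrightarrow> y \<in> M \<Longrightarrow> T (x + y) = T x + T y"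
    and sm: "\<And>c x. c \<in> K \<Longrightarrow> x \<in> M \<Longrightarrow> T (c * x) = c * T x"
  shows "ksubspace K (T ` W)"
proof -
  have 0: "0 \<in> W" using W unfolding ksubspace_def by auto
  then have "T 0 = T 0 + T 0" using add[of 0 0] WM by auto
  then have T0: "T 0 = 0" by (metis add.right_neutral add_left_cancel)
  show ?thesis unfolding ksubspace_def
  proof (intro conjI ballI)
    show "0 \<in> T ` W" using 0 T0 by force
    fix x y assume "x \<in> T ` W" "y \<in> T ` W"
    then obtain u v where "u \<in> W" "v \<in> W" "x = T u" "y = T v" by auto
    then show "x + y \<in> T ` W" using add[of u v] WM ks_facts(2)[OF W, of u v]
      by (metis image_eqI subsetD)
  next
    fix c x assume "c \<in> K" "x \<in> T ` W"
    then obtain u where "u \<in> W" "x = T u" by auto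
    then show "c * x \<in> T ` W" using sm[of c u] WM ks_facts(3)[OF W, of c u] \<open>c \<in> K\<close>
      by (metis image_eqI subsetD)
  qed
qed

lemma ks_int: "ksubspace K A \<Longrightarrow> ksubspace K B \<Longrightarrow> ksubspace K (A \<inter> B)"
  unfolding ksubspace_def by auto

lemma ks_ssum:
  assumes A: "ksubspace K A" and B: "ksubspace K B" shows "ksubspace K (ssum A B)"
  unfolding ksubspace_def
proof (intro conjI ballI)
  show "0 \<in> ssum A B" unfolding ssum_def using ks_facts(1)[OF A] ks_facts(1)[OF B] by force
  fix x y assume "x \<in> ssum A B" "y \<in> ssum A B"
  then obtain u v u' v' where "u \<in> A" "v \<in> B" "u' \<in> A" "v' \<in> B" "x = u + v" "y = u' + v'"
    unfolding ssum_def by auto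
  moreover have "u + v + (u' + v') = (u + u') + (v + v')" by (simp add: algebra_simps)
  ultimately show "x + y \<in> ssum A B" unfolding ssum_def
    using ks_facts(2)[OF A] ks_facts(2)[OF B] by blast
next
  fix c x assume "c \<in> K" "x \<in> ssum A B"
  then obtain u v where "u \<in> A" "v \<in> B" "x = u + v"
    unfolding ssum_def by auto
  moreover have "c * (u + v) = c * u + c * v" by (simp add: algebra_simps)
  ultimately show "c * x \<in> ssum A B" unfolding ssum_def
    using ks_facts(3)[OF A] ks_facts(3)[OF B] \<open>c \<in> K\<close> by blast
qed

lemma card_ssum:
  fixes A B :: "'a::{field,finite} set"
  assumes K: "is_subfield K" and A: "ksubspace K A" and B: "ksubspace K B"
  shows "card (ssum A B) * card (A \<inter> B) = card A * card B"
proof -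
  define F where "F w = {p \<in> A \<times> B. fst p + snd p = w}" for w
  have U: "A \<times> B = (\<Union>w\<in>ssum A B. F w)"
    unfolding F_def ssum_def by force
  have "card (A \<times> B) = (\<Sum>w\<in>ssum A B. card (F w))"
    unfolding U by (rule card_UN_disjoint) (auto simp: F_def)
  also have "\<dots> = (\<Sum>w\<in>ssum A B. card (A \<inter> B))"
  proof (rule sum.cong[OF refl])
    fix w assume "w \<in> ssum A B"
    then obtain u0 v0 where u0: "u0 \<in> A" and v0: "v0 \<in> B" and w: "w = u0 + v0"
      unfolding ssum_def by auto
    have "bij_betw (\<lambda>t. (u0 + t, v0 - t)) (A \<inter> B) (F w)"
    proof (rule bij_betw_imageI)
      show "inj_on (\<lambda>t. (u0 + t, v0 - t)) (A \<inter> B)" by (rule inj_onI) simp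
      show "(\<lambda>t. (u0 + t, v0 - t)) ` (A \<inter> B) = F w"
      proof
        show "(\<lambda>t. (u0 + t, v0 - t)) ` (A \<inter> B) \<subseteq> F w"
          using u0 v0 ks_facts(2)[OF A] ks_diff[OF K B] unfolding F_def w by auto
        show "F w \<subseteq> (\<lambda>t. (u0 + t, v0 - t)) ` (A \<inter> B)"
        proof
          fix p assume p: "p \<in> F w"
          obtain u v where pu: "p = (u, v)" by (cases p)
          have uA: "u \<in> A" and vB: "v \<in> B" and s: "u + v = u0 + v0"
            using p unfolding F_def pu w by auto
          have "u - u0 \<in> A" using ks_diff[OF K A uA u0] .
          moreover have "u - u0 = v0 - v" using s by (simp add: algebra_simps)
          moreover have "v0 - v \<in> B" using ks_diff[OF K B v0 vB] .
          ultimately have "u - u0 \<in> A \<inter> B" by simp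
          moreover have "p = (u0 + (u - u0), v0 - (u - u0))"
            using pu \<open>u - u0 = v0 - v\<close> by (simp add: algebra_simps)
          ultimately show "p \<in> (\<lambda>t. (u0 + t, v0 - t)) ` (A \<inter> B)" by blast
        qed
      qed
    qed
    then show "card (F w) = card (A \<inter> B)" by (simp add: bij_betw_same_card)
  qed
  also have "\<dots> = card (ssum A B) * card (A \<inter> B)" by simp
  finally show ?thesis by (simp add: card_cartesian_product)
qed

lemma sdist_bound:
  fixes A B U :: "'a::{field,finite} set"
  assumes K: "is_subfield K" and A: "ksubspace K A" and B: "ksubspace K B"
    and cA: "card A = card K ^ m" and cB: "card B = card K ^ m"
    and UAB: "U \<subseteq> A \<inter> B" and cU: "card U = card K ^ k"
  shows "sdist K A B \<le> 2 * (m - k)"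
proof -
  define dS where "dS = kdim K (ssum A B)"
  define dI where "dI = kdim K (A \<inter> B)"
  have q1: "card K > 1" using card_K_gt1[OF K] .
  have cS: "card (ssum A B) = card K ^ dS" unfolding dS_def by (rule card_kdim[OF K ks_ssum[OF A B]])
  have cI: "card (A \<inter> B) = card K ^ dI" unfolding dI_def by (rule card_kdim[OF K ks_int[OF A B]])
  have "card K ^ (dS + dI) = card K ^ (m + m)"
    using card_ssum[OF K A B] cS cI cA cB by (simp add: power_add)
  then have e: "dS + dI = m + m" using q1 by simp
  have "card K ^ k \<le> card K ^ dI" using card_mono[OF _ UAB] cU cI by simp
  then have "k \<le> dI" using q1 power_le_imp_le_exp by blast
  moreover have "sdist K A B = dS - dI" unfolding sdist_def dS_def dI_def by (rule refl)
  ultimately show ?thesis using e by linarith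
qed

theorem proposition2p9:
  fixes q r m k s1 s2 :: nat
    and K M :: "'a::{field,finite} set"
    and V1 :: "nat \<Rightarrow> 'a set"
    and Phi :: "nat \<Rightarrow> 'a \<Rightarrow> 'a"
  assumes q_pp: "\<exists>p e. prime p \<and> e \<ge> 1 \<and> q = p ^ e"
    and r_gt: "r > 1" and m_gt: "m > 1"
    and card_F: "card (UNIV :: 'a set) = q ^ (r * m)"
    and K_sub: "is_subfield K" and card_K: "card K = q"
    and M_sub: "is_subfield M" and card_M: "card M = q ^ m"
    and KM: "K \<subseteq> M"
    and k_bds: "1 < k" "k \<le> m"
    and s_pos: "s1 \<ge> 1" "s2 \<ge> 1"
    and V1_G: "\<And>h. h \<in> {1..s1} \<Longrightarrow> V1 h \<in> grass K M k"
    and Phi_add: "\<And>h x y. h \<in> {1..s2} \<Longrightarrow> x \<in> M \<Longrightarrow> y \<in> M \<Longrightarrow>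
                    Phi h (x + y) = Phi h x + Phi h y"
    and Phi_smult: "\<And>h c x. h \<in> {1..s2} \<Longrightarrow> c \<in> K \<Longrightarrow> x \<in> M \<Longrightarrow>
                    Phi h (c * x) = c * Phi h x"
    and Phi_inj: "\<And>h. h \<in> {1..s2} \<Longrightarrow> inj_on (Phi h) M"
    and C2_full: "\<And>h. h \<in> {1..s2} \<Longrightarrow> full_length_orb K UNIV (Phi h ` M)"
    and C2_dist: "min_dist K (\<Union>h\<in>{1..s2}. orb UNIV (Phi h ` M)) > 2 * (m - k)"
  shows "(\<Union>h2\<in>{1..s2}. \<Union>h1\<in>{1..s1}. \<Union>\<alpha>\<in>M - {0}.
            orb UNIV (Phi h2 ` ((\<lambda>x. \<alpha> * x) ` V1 h1))) \<subseteq> grass K UNIV k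
       \<and> (\<forall>h2\<in>{1..s2}. \<forall>h1\<in>{1..s1}. \<forall>\<alpha>\<in>M - {0}.
            full_length_orb K UNIV (Phi h2 ` ((\<lambda>x. \<alpha> * x) ` V1 h1)))"
proof -
  have K: "is_subfield K" by (rule K_sub)
  have MK: "ksubspace K M"
    unfolding ksubspace_def using sf_facts[OF M_sub] KM by auto
  have main: "orb UNIV (Phi h2 ` ((\<lambda>x. \<alpha> * x) ` V1 h1)) \<subseteq> grass K UNIV k
      \<and> full_length_orb K UNIV (Phi h2 ` ((\<lambda>x. \<alpha> * x) ` V1 h1))"
    if h2: "h2 \<in> {1..s2}" and h1: "h1 \<in> {1..s1}" and \<alpha>: "\<alpha> \<in> M - {0}" for h2 h1 \<alpha>
  proof -
    define V where "V = V1 h1"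
    define W where "W = (\<lambda>x. \<alpha> * x) ` V"
    define U where "U = Phi h2 ` W"
    define V2 where "V2 = Phi h2 ` M"
    have VM: "V \<subseteq> M" and Vk: "ksubspace K V" and dV: "kdim K V = k"
      using V1_G[OF h1] unfolding V_def grass_def by auto
    have cV: "card V = card K ^ k" using card_kdim[OF K Vk] dV by simp
    have WM: "W \<subseteq> M" unfolding W_def using VM \<alpha> sf_facts(4)[OF M_sub] by auto
    have Wk: "ksubspace K W" unfolding W_def by (rule ks_mul[OF Vk])
    have cW: "card W = card V" unfolding W_def using \<alpha> by (intro card_image inj_onI) auto
    have Uk: "ksubspace K U" unfolding U_def
      by (rule ks_img[OF Wk WM]) (auto intro: Phi_add[OF h2] Phi_smult[OF h2])
    have cU: "card U = card K ^ k" unfolding U_def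
      using card_image[OF inj_on_subset[OF Phi_inj[OF h2] WM]] cW cV by simp
    have UV2: "U \<subseteq> V2" unfolding U_def V2_def using WM by auto
    have V2k: "ksubspace K V2" unfolding V2_def
      by (rule ks_img[OF MK subset_refl]) (auto intro: Phi_add[OF h2] Phi_smult[OF h2])
    have cV2: "card V2 = card K ^ m" unfolding V2_def
      using card_image[OF Phi_inj[OF h2]] card_M card_K by simp
    have P1: "orb UNIV U \<subseteq> grass K UNIV k"
    proof
      fix X assume "X \<in> orb UNIV U"
      then obtain b where b: "b \<noteq> 0" "X = (\<lambda>x. b * x) ` U" unfolding orb_def by auto
      have Xk: "ksubspace K X" unfolding b(2) by (rule ks_mul[OF Uk])
      have "card X = card U" unfolding b(2) using b(1) by (intro card_image inj_onI) auto
      then have "kdim K X = k" using kdim_eq[OF K Xk] cU by simp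
      then show "X \<in> grass K UNIV k" unfolding grass_def using Xk by auto
    qed
    have P2: "full_length_orb K UNIV U"
      unfolding full_length_orb_def
    proof
      show "{b \<in> UNIV - {0}. (\<lambda>x. b * x) ` U = U} \<subseteq> K - {0}"
      proof
        fix b assume "b \<in> {b \<in> UNIV - {0}. (\<lambda>x. b * x) ` U = U}"
        then have b0: "b \<noteq> 0" and bU: "(\<lambda>x. b * x) ` U = U" by auto
        define C where "C = (\<Union>h\<in>{1..s2}. orb UNIV (Phi h ` M))"
        have bV2: "(\<lambda>x. b * x) ` V2 = V2"
        proof (rule ccontr)
          assume ne: "(\<lambda>x. b * x) ` V2 \<noteq> V2"
          have "V2 = (\<lambda>x. 1 * x) ` V2" by simp
          have "V2 \<in> orb UNIV (Phi h2 ` M)" unfolding orb_def V2_def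
            by (rule CollectI, rule exI[of _ 1]) simp
          then have V2C: "V2 \<in> C" unfolding C_def using h2 by (rule UN_I[rotated])
          have "(\<lambda>x. b * x) ` V2 \<in> orb UNIV (Phi h2 ` M)" unfolding orb_def V2_def
            using b0 by (intro CollectI exI[of _ b]) simp
          then have bV2C: "(\<lambda>x. b * x) ` V2 \<in> C" unfolding C_def using h2 by (rule UN_I[rotated])
          have fin: "finite {sdist K U V | U V. U \<in> C \<and> V \<in> C \<and> U \<noteq> V}"
          proof -
            have "{sdist K U V | U V. U \<in> C \<and> V \<in> C \<and> U \<noteq> V} \<subseteq> (\<lambda>p. sdist K (fst p) (snd p)) ` UNIV"
            proof
              fix z assume "z \<in> {sdist K U V | U V. U \<in> C \<and> V \<in> C \<and> U \<noteq> V}"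
              then obtain U V where "z = sdist K U V" by blast
              then show "z \<in> (\<lambda>p. sdist K (fst p) (snd p)) ` UNIV"
                by (intro rev_image_eqI[of "(U, V)"]) simp_all
            qed
            then show ?thesis by (rule finite_subset) simp
          qed
          have mem: "sdist K V2 ((\<lambda>x. b * x) ` V2) \<in> {sdist K U V | U V. U \<in> C \<and> V \<in> C \<and> U \<noteq> V}"
            using V2C bV2C ne by fast
          have "min_dist K C \<le> sdist K V2 ((\<lambda>x. b * x) ` V2)"
            unfolding min_dist_def using fin mem by (rule Min_le)
          moreover have "sdist K V2 ((\<lambda>x. b * x) ` V2) \<le> 2 * (m - k)"
          proof (rule sdist_bound[OF K V2k ks_mul[OF V2k] cV2 _ _ cU])
            show "card ((\<lambda>x. b * x) ` V2) = card K ^ m"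
              using cV2 b0 by (subst card_image) (auto intro: inj_onI)
            have "(\<lambda>x. b * x) ` U \<subseteq> (\<lambda>x. b * x) ` V2" using UV2 by (rule image_mono)
            then have "U \<subseteq> (\<lambda>x. b * x) ` V2" by (simp only: bU)
            then show "U \<subseteq> V2 \<inter> (\<lambda>x. b * x) ` V2" using UV2 by blast
          qed
          ultimately show False using C2_dist unfolding C_def by simp
        qed
        then have "b \<in> {b \<in> UNIV - {0}. (\<lambda>x. b * x) ` (Phi h2 ` M) = Phi h2 ` M}"
          using b0 unfolding V2_def by simp
        then show "b \<in> K - {0}" using C2_full[OF h2] unfolding full_length_orb_def by (simp only:)
      qed
      show "K - {0} \<subseteq> {b \<in> UNIV - {0}. (\<lambda>x. b * x) ` U = U}"
      proof
        fix c assume c: "c \<in> K - {0}"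
        have "(\<lambda>x. c * x) ` U \<subseteq> U" using ks_facts(3)[OF Uk] c by auto
        moreover have "card ((\<lambda>x. c * x) ` U) = card U" using c by (intro card_image inj_onI) auto
        ultimately have "(\<lambda>x. c * x) ` U = U" by (intro card_subset_eq) simp_all
        then show "c \<in> {b \<in> UNIV - {0}. (\<lambda>x. b * x) ` U = U}" using c by auto
      qed
    qed
    show ?thesis using P1 P2 unfolding U_def W_def V_def by simp
  qed
  show ?thesis
  proof
    show "(\<Union>h2\<in>{1..s2}. \<Union>h1\<in>{1..s1}. \<Union>\<alpha>\<in>M - {0}.
            orb UNIV (Phi h2 ` ((\<lambda>x. \<alpha> * x) ` V1 h1))) \<subseteq> grass K UNIV k"
      by (intro UN_least) (rule main[THEN conjunct1]; assumption)
    show "\<forall>h2\<in>{1..s2}. \<forall>h1\<in>{1..s1}. \<forall>\<alpha>\<in>M - {0}.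
            full_length_orb K UNIV (Phi h2 ` ((\<lambda>x. \<alpha> * x) ` V1 h1))"
      by (intro ballI) (rule main[THEN conjunct2]; assumption)
  qed
qed

end
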